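(* Let $k\ge1$. The logic $\mathbb{L}_k$ is algebraizable in the sense of Blok and Pigozzi with set of equivalence formulas $\Delta(p_1,p_2)=\{\delta(p_1,p_2)\}$ and set of defining equations $E(p_1)=\{p_1\approx p_1\leftrightarrow p_1\}$; that is, for all variables $p_1,\dots,p_{2n}$: (C1) $\models_k\delta(p_1,p_1)$; (C2) $\delta(p_1,p_2)\models_k\delta(p_2,p_1)$; (C3) $\delta(p_1,p_2),\delta(p_2,p_3)\models_k\delta(p_1,p_3)$; (C4) $\delta(p_1,p_{n+1}),\dots,\delta(p_n,p_{2n})\models_k\delta(\#(p_1,\dots,p_n),\#(p_{n+1},\dots,p_{2n}))$ for every $n$-ary connective $\#$ with $n\ge1$; (C5) $p_1\models_k\delta(p_1,p_1\leftrightarrow p_1)$; (C6) $\delta(p_1,p_1\leftrightarrow p_1)\models_k p_1$.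
   Context: A modal pseudocomplemented De Morgan algebra ($mpM$-algebra) is an algebra $\langle A,\wedge,\vee,\sim,{}^\ast,0,1\rangle$ such that $\langle A,\wedge,\vee,\sim,0,1\rangle$ is a De Morgan algebra (bounded distributive lattice with $\sim\sim x=x$, $\sim(x\vee y)=\sim x\wedge\sim y$), $x^\ast$ is the pseudocomplement of $x$, and $x\vee\sim x\le x\vee x^\ast$. A $\mathcal{C}_k$-algebra ($k\ge1$) is a pair $(A,t)$ with $A$ an $mpM$-algebra and $t$ an $mpM$-automorphism of $A$ with $t^k=\mathrm{id}$. $Fm$ is the set of formulas built from a denumerable set of variables with connectives $\wedge,\vee$ (binary), $\sim,{}^\ast,t$ (unary), $\top,\bot$ (constants); a valuation into $(A,t)$ is a homomorphism $v:Fm\to(A,t)$ (with $v(\top)=1$, $v(\bot)=0$). The $1$-assertional logic $\mathbb{L}_k=\langle Fm,\models_k\rangle$: $\Gamma\models_k\alpha$ iff for every $\mathcal{C}_k$-algebra $(A,t)$ and every valuation $v$, if $v(\gamma)=1$ for all $\gamma\in\Gamma$ then $v(\alpha)=1$. Define $x\to y=\sim\big((\sim(x\vee y))^\ast\wedge(x\vee y)\big)\vee\big((\sim(x\wedge y))^\ast\wedge(x\wedge y)\big)$, $x\leftrightarrow y=(x\to y)\wedge(\sim y\to\sim x)$, and $\delta(p,q)=\bigwedge_{i=0}^{k-1}(t^ip\leftrightarrow t^iq)$. *)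

theory Defs
  imports Main
begin

datatype fm = Var nat | Conj fm fm | Disj fm fm | Neg fm | Star fm | Tc fm | Top | Bot

definition imp :: "fm \<Rightarrow> fm \<Rightarrow> fm" where
  "imp x y = Disj (Neg (Conj (Star (Neg (Disj x y))) (Disj x y)))
                  (Conj (Star (Neg (Conj x y))) (Conj x y))"

definition eqv :: "fm \<Rightarrow> fm \<Rightarrow> fm" where
  "eqv x y = Conj (imp x y) (imp (Neg y) (Neg x))"

fun Conjs :: "fm list \<Rightarrow> fm" where
  "Conjs [] = Top"
| "Conjs [a] = a"
| "Conjs (a # as) = Conj a (Conjs as)"

definition delta :: "nat \<Rightarrow> fm \<Rightarrow> fm \<Rightarrow> fm" where
  "delta k p q = Conjs (map (\<lambda>i. eqv ((Tc ^^ i) p) ((Tc ^^ i) q)) [0..<k])"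

record 'a ck_alg =
  car :: "'a set"
  mt :: "'a \<Rightarrow> 'a \<Rightarrow> 'a"
  jn :: "'a \<Rightarrow> 'a \<Rightarrow> 'a"
  ng :: "'a \<Rightarrow> 'a"
  pc :: "'a \<Rightarrow> 'a"
  zr :: "'a"
  un :: "'a"
  tt :: "'a \<Rightarrow> 'a"

definition leq :: "'a ck_alg \<Rightarrow> 'a \<Rightarrow> 'a \<Rightarrow> bool" where
  "leq M x y \<longleftrightarrow> mt M x y = x"

definition bdl :: "'a ck_alg \<Rightarrow> bool" where
  "bdl M \<longleftrightarrow>
     zr M \<in> car M \<and> un M \<in> car M \<and>
     (\<forall>x\<in>car M. \<forall>y\<in>car M. mt M x y \<in> car M \<and> jn M x y \<in> car M) \<and>
     (\<forall>x\<in>car M. \<forall>y\<in>car M. mt M x y = mt M y x \<and> jn M x y = jn M y x) \<and>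
     (\<forall>x\<in>car M. \<forall>y\<in>car M. \<forall>z\<in>car M.
        mt M (mt M x y) z = mt M x (mt M y z) \<and> jn M (jn M x y) z = jn M x (jn M y z)) \<and>
     (\<forall>x\<in>car M. \<forall>y\<in>car M. mt M x (jn M x y) = x \<and> jn M x (mt M x y) = x) \<and>
     (\<forall>x\<in>car M. \<forall>y\<in>car M. \<forall>z\<in>car M. mt M x (jn M y z) = jn M (mt M x y) (mt M x z)) \<and>
     (\<forall>x\<in>car M. mt M x (zr M) = zr M \<and> jn M x (un M) = un M)"

definition demorgan :: "'a ck_alg \<Rightarrow> bool" where
  "demorgan M \<longleftrightarrow> bdl M \<and>
     (\<forall>x\<in>car M. ng M x \<in> car M \<and> ng M (ng M x) = x) \<and>
     (\<forall>x\<in>car M. \<forall>y\<in>car M. ng M (jn M x y) = mt M (ng M x) (ng M y))"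

definition mpM :: "'a ck_alg \<Rightarrow> bool" where
  "mpM M \<longleftrightarrow> demorgan M \<and>
     (\<forall>x\<in>car M. pc M x \<in> car M \<and> (\<forall>y\<in>car M. mt M y x = zr M \<longleftrightarrow> leq M y (pc M x))) \<and>
     (\<forall>x\<in>car M. leq M (jn M x (ng M x)) (jn M x (pc M x)))"

definition Ck_algebra :: "nat \<Rightarrow> 'a ck_alg \<Rightarrow> bool" where
  "Ck_algebra k M \<longleftrightarrow> mpM M \<and>
     bij_betw (tt M) (car M) (car M) \<and>
     (\<forall>x\<in>car M. \<forall>y\<in>car M. tt M (mt M x y) = mt M (tt M x) (tt M y)
                            \<and> tt M (jn M x y) = jn M (tt M x) (tt M y)) \<and>
     (\<forall>x\<in>car M. tt M (ng M x) = ng M (tt M x) \<and> tt M (pc M x) = pc M (tt M x)) \<and>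
     tt M (zr M) = zr M \<and> tt M (un M) = un M \<and>
     (\<forall>x\<in>car M. (tt M ^^ k) x = x)"

fun eval :: "'a ck_alg \<Rightarrow> (nat \<Rightarrow> 'a) \<Rightarrow> fm \<Rightarrow> 'a" where
  "eval M v (Var n) = v n"
| "eval M v (Conj a b) = mt M (eval M v a) (eval M v b)"
| "eval M v (Disj a b) = jn M (eval M v a) (eval M v b)"
| "eval M v (Neg a) = ng M (eval M v a)"
| "eval M v (Star a) = pc M (eval M v a)"
| "eval M v (Tc a) = tt M (eval M v a)"
| "eval M v Top = un M"
| "eval M v Bot = zr M"

text \<open>1-assertional consequence of L_k, relative to all C_k-algebras whose carrier
  lives in the type 'a.  A theorem proved for an arbitrary type 'a yields the
  consequence over all C_k-algebras.\<close>
definition cons_k :: "'a itself \<Rightarrow> nat \<Rightarrow> fm set \<Rightarrow> fm \<Rightarrow> bool" where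
  "cons_k _ k \<Gamma> \<phi> \<longleftrightarrow>
     (\<forall>(M::'a ck_alg) v. Ck_algebra k M \<and> (\<forall>n. v n \<in> car M) \<longrightarrow>
        (\<forall>\<gamma>\<in>\<Gamma>. eval M v \<gamma> = un M) \<longrightarrow> eval M v \<phi> = un M)"

end

theory Submission
  imports Defs
begin

locale mpm = fixes M :: "'a ck_alg" assumes mpM: "mpM M"
begin

abbreviation C where "C \<equiv> car M"
abbreviation meet (infixl "\<sqinter>" 70) where "x \<sqinter> y \<equiv> mt M x y"
abbreviation join (infixl "\<squnion>" 65) where "x \<squnion> y \<equiv> jn M x y"
abbreviation neg ("\<sim>_" [80] 80) where "\<sim>x \<equiv> ng M x"
abbreviation ps where "ps x \<equiv> pc M x"
abbreviation Z where "Z \<equiv> zr M"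
abbreviation U where "U \<equiv> un M"

lemma bdl: "bdl M" and dm: "demorgan M" using mpM unfolding mpM_def demorgan_def by auto

lemma zC[simp]: "Z \<in> C" and uC[simp]: "U \<in> C" using bdl unfolding bdl_def by auto
lemma mC[simp]: "x \<in> C \<Longrightarrow> y \<in> C \<Longrightarrow> x \<sqinter> y \<in> C" using bdl unfolding bdl_def by auto
lemma jC[simp]: "x \<in> C \<Longrightarrow> y \<in> C \<Longrightarrow> x \<squnion> y \<in> C" using bdl unfolding bdl_def by auto
lemma nC[simp]: "x \<in> C \<Longrightarrow> \<sim>x \<in> C" using dm unfolding demorgan_def by auto
lemma pC[simp]: "x \<in> C \<Longrightarrow> ps x \<in> C" using mpM unfolding mpM_def by auto
lemma mcomm: "x \<in> C \<Longrightarrow> y \<in> C \<Longrightarrow> x \<sqinter> y = y \<sqinter> x" using bdl unfolding bdl_def by auto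
lemma jcomm: "x \<in> C \<Longrightarrow> y \<in> C \<Longrightarrow> x \<squnion> y = y \<squnion> x" using bdl unfolding bdl_def by auto
lemma massoc: "x \<in> C \<Longrightarrow> y \<in> C \<Longrightarrow> z \<in> C \<Longrightarrow> x \<sqinter> y \<sqinter> z = x \<sqinter> (y \<sqinter> z)" using bdl unfolding bdl_def by auto
lemma jassoc: "x \<in> C \<Longrightarrow> y \<in> C \<Longrightarrow> z \<in> C \<Longrightarrow> x \<squnion> y \<squnion> z = x \<squnion> (y \<squnion> z)" using bdl unfolding bdl_def by auto
lemma abs1: "x \<in> C \<Longrightarrow> y \<in> C \<Longrightarrow> x \<sqinter> (x \<squnion> y) = x" using bdl unfolding bdl_def by auto
lemma abs2: "x \<in> C \<Longrightarrow> y \<in> C \<Longrightarrow> x \<squnion> (x \<sqinter> y) = x" using bdl unfolding bdl_def by auto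
lemma dist: "x \<in> C \<Longrightarrow> y \<in> C \<Longrightarrow> z \<in> C \<Longrightarrow> x \<sqinter> (y \<squnion> z) = (x \<sqinter> y) \<squnion> (x \<sqinter> z)" using bdl unfolding bdl_def by auto
lemma mz[simp]: "x \<in> C \<Longrightarrow> x \<sqinter> Z = Z" using bdl unfolding bdl_def by auto
lemma ju[simp]: "x \<in> C \<Longrightarrow> x \<squnion> U = U" using bdl unfolding bdl_def by auto
lemma nn[simp]: "x \<in> C \<Longrightarrow> \<sim>\<sim>x = x" using dm unfolding demorgan_def by auto
lemma dmj: "x \<in> C \<Longrightarrow> y \<in> C \<Longrightarrow> \<sim>(x \<squnion> y) = \<sim>x \<sqinter> \<sim>y" using dm unfolding demorgan_def by auto
lemma pcax: "x \<in> C \<Longrightarrow> y \<in> C \<Longrightarrow> y \<sqinter> x = Z \<longleftrightarrow> y \<sqinter> ps x = y" using mpM unfolding mpM_def leq_def by auto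
lemma ax: "x \<in> C \<Longrightarrow> (x \<squnion> \<sim>x) \<sqinter> (x \<squnion> ps x) = x \<squnion> \<sim>x" using mpM unfolding mpM_def leq_def by auto

lemma mlcomm: "x \<in> C \<Longrightarrow> y \<in> C \<Longrightarrow> z \<in> C \<Longrightarrow> x \<sqinter> (y \<sqinter> z) = y \<sqinter> (x \<sqinter> z)"
  by (metis massoc mcomm)
lemma jlcomm: "x \<in> C \<Longrightarrow> y \<in> C \<Longrightarrow> z \<in> C \<Longrightarrow> x \<squnion> (y \<squnion> z) = y \<squnion> (x \<squnion> z)"
  by (metis jassoc jcomm)
lemma midem[simp]: "x \<in> C \<Longrightarrow> x \<sqinter> x = x" by (metis abs1 abs2 mC)
lemma jidem[simp]: "x \<in> C \<Longrightarrow> x \<squnion> x = x" by (metis abs1 abs2 jC)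
lemma jz[simp]: "x \<in> C \<Longrightarrow> x \<squnion> Z = x" by (metis abs2 mz zC)
lemma mu[simp]: "x \<in> C \<Longrightarrow> x \<sqinter> U = x" by (metis abs1 ju uC)
lemma zm[simp]: "x \<in> C \<Longrightarrow> Z \<sqinter> x = Z" by (metis mz mcomm zC)
lemma uj[simp]: "x \<in> C \<Longrightarrow> U \<squnion> x = U" by (metis ju jcomm uC)
lemma zj[simp]: "x \<in> C \<Longrightarrow> Z \<squnion> x = x" by (metis jz jcomm zC)
lemma um[simp]: "x \<in> C \<Longrightarrow> U \<sqinter> x = x" by (metis mu mcomm uC)
lemma dist2: "x \<in> C \<Longrightarrow> y \<in> C \<Longrightarrow> z \<in> C \<Longrightarrow> (y \<squnion> z) \<sqinter> x = (y \<sqinter> x) \<squnion> (z \<sqinter> x)"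
  by (metis dist mcomm jC)
lemma dmm: "x \<in> C \<Longrightarrow> y \<in> C \<Longrightarrow> \<sim>(x \<sqinter> y) = \<sim>x \<squnion> \<sim>y"
proof -
  assume x: "x \<in> C" and y: "y \<in> C"
  have "\<sim>(\<sim>x \<squnion> \<sim>y) = x \<sqinter> y" using x y by (simp add: dmj)
  hence "\<sim>(x \<sqinter> y) = \<sim>\<sim>(\<sim>x \<squnion> \<sim>y)" by simp
  thus ?thesis using x y by simp
qed
lemma nU[simp]: "\<sim>U = Z"
proof -
  have "\<sim>U = \<sim>(\<sim>Z \<squnion> U)" using ju[of "\<sim>Z"] by simp
  also have "\<dots> = \<sim>\<sim>Z \<sqinter> \<sim>U" using dmj[of "\<sim>Z" U] by simp
  also have "\<dots> = Z" using zm[of "\<sim>U"] by simp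
  finally show ?thesis .
qed
lemma nZ[simp]: "\<sim>Z = U" by (metis nU nn uC)

lemma psm[simp]: "x \<in> C \<Longrightarrow> ps x \<sqinter> x = Z" using pcax[of x "ps x"] by simp
lemma psm2[simp]: "x \<in> C \<Longrightarrow> x \<sqinter> ps x = Z" by (metis psm mcomm pC)

lemma mleft[simp]: "x \<in> C \<Longrightarrow> y \<in> C \<Longrightarrow> x \<sqinter> (x \<sqinter> y) = x \<sqinter> y"
  by (metis massoc midem)
lemmas ac = mcomm jcomm massoc jassoc mlcomm jlcomm

definition u where "u z = ps (\<sim>z) \<sqinter> z"
lemma uCl[simp]: "z \<in> C \<Longrightarrow> u z \<in> C" by (simp add: u_def)

lemma B: "z \<in> C \<Longrightarrow> z \<sqinter> (\<sim>z \<squnion> ps (\<sim>z)) = z"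
proof -
  assume z: "z \<in> C"
  have a: "(\<sim>z \<squnion> z) \<sqinter> (\<sim>z \<squnion> ps (\<sim>z)) = \<sim>z \<squnion> z" using ax[of "\<sim>z"] z by simp
  have "z \<sqinter> (\<sim>z \<squnion> ps (\<sim>z)) = z \<sqinter> (\<sim>z \<squnion> z) \<sqinter> (\<sim>z \<squnion> ps (\<sim>z))"
    using z by (metis abs1 jcomm nC)
  also have "\<dots> = z \<sqinter> (\<sim>z \<squnion> z)" using a z by (simp add: massoc)
  also have "\<dots> = z" using z by (metis abs1 jcomm nC)
  finally show ?thesis .
qed

lemma A: "x \<in> C \<Longrightarrow> (\<sim>x \<sqinter> \<sim>(ps x)) \<sqinter> x = \<sim>x \<sqinter> \<sim>(ps x)"
proof -
  assume x: "x \<in> C"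
  have "\<sim>((x \<squnion> \<sim>x) \<sqinter> (x \<squnion> ps x)) = \<sim>(x \<squnion> \<sim>x)" using ax x by simp
  hence e: "(\<sim>x \<sqinter> x) \<squnion> (\<sim>x \<sqinter> \<sim>(ps x)) = \<sim>x \<sqinter> x" using x by (simp add: dmm dmj)
  have "(\<sim>x \<sqinter> \<sim>(ps x)) \<sqinter> (\<sim>x \<sqinter> x) = (\<sim>x \<sqinter> \<sim>(ps x)) \<sqinter> ((\<sim>x \<sqinter> x) \<squnion> (\<sim>x \<sqinter> \<sim>(ps x)))"
    using e by simp
  also have "\<dots> = \<sim>x \<sqinter> \<sim>(ps x)" using x by (metis abs1 jcomm mC nC pC)
  finally have "(\<sim>x \<sqinter> \<sim>(ps x)) \<sqinter> (\<sim>x \<sqinter> x) = \<sim>x \<sqinter> \<sim>(ps x)" .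
  thus ?thesis using x by (simp add: ac mleft)
qed

lemma dec: "z \<in> C \<Longrightarrow> z = (z \<sqinter> \<sim>z) \<squnion> u z"
  using B[of z] by (simp add: dist u_def mcomm)

lemma cmp: "z \<in> C \<Longrightarrow> u z \<sqinter> \<sim>(u z) = Z"
proof -
  assume z: "z \<in> C"
  define p where "p = ps (\<sim>z)"
  have p: "p \<in> C" using z p_def by simp
  have pz: "p \<sqinter> \<sim>z = Z" using p_def z by simp
  have A': "(z \<sqinter> \<sim>p) \<sqinter> \<sim>z = z \<sqinter> \<sim>p" using A[of "\<sim>z"] z p_def by simp
  have "u z \<sqinter> \<sim>(u z) = (p \<sqinter> z) \<sqinter> (\<sim>p \<squnion> \<sim>z)" using z p by (simp add: u_def p_def dmm)
  also have "\<dots> = (p \<sqinter> (z \<sqinter> \<sim>p)) \<squnion> (p \<sqinter> \<sim>z \<sqinter> z)" using z p by (simp add: dist ac)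
  also have "p \<sqinter> (z \<sqinter> \<sim>p) = (p \<sqinter> \<sim>z) \<sqinter> (z \<sqinter> \<sim>p)" using A' z p by (simp add: ac)
  finally show ?thesis using pz z p by simp
qed

lemma cmp2: "z \<in> C \<Longrightarrow> \<sim>(u z) \<squnion> u z = U"
proof -
  assume z: "z \<in> C"
  have "\<sim>(\<sim>(u z) \<squnion> u z) = Z" using cmp[OF z] z by (simp add: dmj mcomm)
  hence "\<sim>\<sim>(\<sim>(u z) \<squnion> u z) = U" by simp
  thus ?thesis using z by simp
qed

definition le where "le x y \<longleftrightarrow> x \<sqinter> y = x"

lemma le_neg: "x \<in> C \<Longrightarrow> y \<in> C \<Longrightarrow> le x y \<Longrightarrow> le (\<sim>y) (\<sim>x)"
  unfolding le_def by (metis abs1 dmm jcomm nC)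

lemma le_ps: "x \<in> C \<Longrightarrow> y \<in> C \<Longrightarrow> le x y \<Longrightarrow> le (ps y) (ps x)"
proof -
  assume x: "x \<in> C" and y: "y \<in> C" and l: "le x y"
  have "ps y \<sqinter> x = ps y \<sqinter> (y \<sqinter> x)" using l x y unfolding le_def by (simp add: mcomm)
  also have "\<dots> = Z" using x y by (simp add: massoc[symmetric])
  finally show ?thesis using pcax[of x "ps y"] x y unfolding le_def by simp
qed

lemma u_mono: "c \<in> C \<Longrightarrow> d \<in> C \<Longrightarrow> le c d \<Longrightarrow> le (u c) (u d)"
proof -
  assume c: "c \<in> C" and d: "d \<in> C" and l: "le c d"
  have h: "ps (\<sim>c) \<sqinter> ps (\<sim>d) = ps (\<sim>c)" using le_ps le_neg l c d unfolding le_def by simp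
  have l': "c \<sqinter> d = c" using l unfolding le_def .
  define pc' where "pc' = ps (\<sim>c)"
  define pd where "pd = ps (\<sim>d)"
  have P: "pc' \<in> C" "pd \<in> C" using c d by (simp_all add: pc'_def pd_def)
  have "(pc' \<sqinter> c) \<sqinter> (pd \<sqinter> d) = pc' \<sqinter> (c \<sqinter> (pd \<sqinter> d))" using P c d by (simp only: massoc mC)
  also have "\<dots> = pc' \<sqinter> (pd \<sqinter> (c \<sqinter> d))" using P c d by (simp only: mlcomm[of c pd])
  also have "\<dots> = (pc' \<sqinter> pd) \<sqinter> c" using P c d l' by (simp only: massoc)
  also have "\<dots> = pc' \<sqinter> c" using h by (simp add: pc'_def pd_def)
  finally show ?thesis unfolding le_def u_def pc'_def pd_def .
qed

lemma G: "c \<in> C \<Longrightarrow> d \<in> C \<Longrightarrow> le c d \<Longrightarrow> \<sim>(u d) \<squnion> u c = U \<Longrightarrow> u c = u d"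
proof -
  assume c: "c \<in> C" and d: "d \<in> C" and l: "le c d" and e: "\<sim>(u d) \<squnion> u c = U"
  have "u d = u d \<sqinter> (\<sim>(u d) \<squnion> u c)" using e d by simp
  also have "\<dots> = (u d \<sqinter> \<sim>(u d)) \<squnion> (u d \<sqinter> u c)" using c d by (simp add: dist)
  also have "\<dots> = u c" using cmp[OF d] u_mono[OF c d l] c d unfolding le_def by (simp add: mcomm)
  finally show ?thesis by simp
qed

lemma H: "c \<in> C \<Longrightarrow> d \<in> C \<Longrightarrow> le c d \<Longrightarrow> u c = u d \<Longrightarrow> u (\<sim>c) = u (\<sim>d) \<Longrightarrow> c = d"
proof -
  assume c: "c \<in> C" and d: "d \<in> C" and l: "le c d" and e1: "u c = u d" and e2: "u (\<sim>c) = u (\<sim>d)"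
  have nl: "\<sim>d \<sqinter> \<sim>c = \<sim>d" using le_neg[OF c d l] unfolding le_def .
  have dc0: "\<sim>c = (\<sim>c \<sqinter> \<sim>\<sim>c) \<squnion> u (\<sim>c)" using c by (intro dec) simp
  have dc: "(\<sim>c) = (\<sim>c \<sqinter> c) \<squnion> u (\<sim>d)" using c by (subst e2[symmetric]) (subst (2) nn[OF c, symmetric], rule dc0)
  have ud: "u (\<sim>d) = ps d \<sqinter> \<sim>d" using d by (simp add: u_def)
  have "d \<sqinter> \<sim>d = d \<sqinter> \<sim>d \<sqinter> \<sim>c" using nl c d by (simp add: massoc)
  also have "\<dots> = d \<sqinter> \<sim>d \<sqinter> ((\<sim>c \<sqinter> c) \<squnion> (ps d \<sqinter> \<sim>d))" using dc ud by simp
  also have "\<dots> = ((d \<sqinter> \<sim>d) \<sqinter> (\<sim>c \<sqinter> c)) \<squnion> ((d \<sqinter> \<sim>d) \<sqinter> (ps d \<sqinter> \<sim>d))" using c d by (simp only: dist mC nC pC)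
  also have "(d \<sqinter> \<sim>d) \<sqinter> (ps d \<sqinter> \<sim>d) = d \<sqinter> (\<sim>d \<sqinter> (ps d \<sqinter> \<sim>d))" using d by (simp only: massoc mC nC pC)
  also have "\<dots> = d \<sqinter> (ps d \<sqinter> (\<sim>d \<sqinter> \<sim>d))" using d by (simp only: mlcomm[of "\<sim>d" "ps d"] mC nC pC)
  also have "\<dots> = (d \<sqinter> ps d) \<sqinter> (\<sim>d \<sqinter> \<sim>d)" using d by (simp only: massoc mC nC pC)
  also have "\<dots> = Z" using d by simp
  also have "((d \<sqinter> \<sim>d) \<sqinter> (\<sim>c \<sqinter> c)) \<squnion> Z = (d \<sqinter> \<sim>d) \<sqinter> (\<sim>c \<sqinter> c)" using c d by simp
  finally have k0: "d \<sqinter> \<sim>d = (d \<sqinter> \<sim>d) \<sqinter> (\<sim>c \<sqinter> c)" .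
  have "(d \<sqinter> \<sim>d) \<sqinter> c = ((d \<sqinter> \<sim>d) \<sqinter> (\<sim>c \<sqinter> c)) \<sqinter> c" using k0 by (rule arg_cong[where f="\<lambda>x. x \<sqinter> c"])
  also have "\<dots> = (d \<sqinter> \<sim>d) \<sqinter> ((\<sim>c \<sqinter> c) \<sqinter> c)" using c d by (simp only: massoc mC nC)
  also have "(\<sim>c \<sqinter> c) \<sqinter> c = \<sim>c \<sqinter> c" using c by (simp add: massoc)
  finally have k: "(d \<sqinter> \<sim>d) \<sqinter> c = d \<sqinter> \<sim>d" using k0 by simp
  have ucc: "u c \<sqinter> c = u c" using c by (simp add: u_def massoc)
  have dd: "d = (d \<sqinter> \<sim>d) \<squnion> u c" by (subst e1) (rule dec[OF d])
  have "d \<sqinter> c = ((d \<sqinter> \<sim>d) \<squnion> u c) \<sqinter> c" using dd by (rule arg_cong[where f="\<lambda>x. x \<sqinter> c"])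
  also have "\<dots> = ((d \<sqinter> \<sim>d) \<sqinter> c) \<squnion> (u c \<sqinter> c)" using c d by (simp only: dist2 mC nC uCl)
  also have "\<dots> = (d \<sqinter> \<sim>d) \<squnion> u c" by (simp only: k ucc)
  also have "\<dots> = d" using dd by (rule sym)
  finally show ?thesis using l c d unfolding le_def by (simp add: mcomm)
qed

definition I where "I a b = \<sim>(u (a \<squnion> b)) \<squnion> u (a \<sqinter> b)"
definition E where "E a b = I a b \<sqinter> I (\<sim>b) (\<sim>a)"

lemma mU: "x \<in> C \<Longrightarrow> y \<in> C \<Longrightarrow> x \<sqinter> y = U \<Longrightarrow> x = U \<and> y = U"
proof -
  assume x: "x \<in> C" and y: "y \<in> C" and e: "x \<sqinter> y = U"
  have "x = x \<squnion> (x \<sqinter> y)" using abs2[OF x y] by simp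
  also have "\<dots> = U" using e x by simp
  finally have 1: "x = U" .
  have "y = y \<squnion> (y \<sqinter> x)" using abs2[OF y x] by simp
  also have "y \<sqinter> x = U" using e mcomm[OF x y] by simp
  finally have 2: "y = U" using y by simp
  show ?thesis using 1 2 by simp
qed

lemma IC[simp]: "a \<in> C \<Longrightarrow> b \<in> C \<Longrightarrow> I a b \<in> C" by (simp add: I_def)

lemma E_refl: "a \<in> C \<Longrightarrow> E a a = U"
  by (simp add: E_def I_def cmp2)

lemma le_mj: "a \<in> C \<Longrightarrow> b \<in> C \<Longrightarrow> le (a \<sqinter> b) (a \<squnion> b)"
proof -
  assume a: "a \<in> C" and b: "b \<in> C"
  have "b \<sqinter> (a \<squnion> b) = b" using abs1[OF b a] jcomm[OF a b] by simp
  hence "(a \<sqinter> b) \<sqinter> (a \<squnion> b) = a \<sqinter> b" using a b by (simp add: massoc)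
  thus ?thesis unfolding le_def .
qed

lemma E_sep: "a \<in> C \<Longrightarrow> b \<in> C \<Longrightarrow> E a b = U \<Longrightarrow> a = b"
proof -
  assume a: "a \<in> C" and b: "b \<in> C" and e: "E a b = U"
  have "I a b \<sqinter> I (\<sim>b) (\<sim>a) = U" using e unfolding E_def .
  hence i1: "I a b = U" and i2: "I (\<sim>b) (\<sim>a) = U" using mU a b by (meson IC nC)+
  have l1: "le (a \<sqinter> b) (a \<squnion> b)" using le_mj a b by simp
  have l2: "le (\<sim>b \<sqinter> \<sim>a) (\<sim>b \<squnion> \<sim>a)" using le_mj a b by simp
  have g1: "u (a \<sqinter> b) = u (a \<squnion> b)" using G[OF _ _ l1] i1 a b unfolding I_def by simp
  have g2: "u (\<sim>b \<sqinter> \<sim>a) = u (\<sim>b \<squnion> \<sim>a)" using G[OF _ _ l2] i2 a b unfolding I_def by simp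
  have n1: "\<sim>(a \<sqinter> b) = \<sim>b \<squnion> \<sim>a" using a b by (simp add: dmm jcomm)
  have n2: "\<sim>(a \<squnion> b) = \<sim>b \<sqinter> \<sim>a" using a b by (simp add: dmj mcomm)
  have g2': "u (\<sim>(a \<sqinter> b)) = u (\<sim>(a \<squnion> b))" unfolding n1 n2 using g2 by simp
  have eq: "a \<sqinter> b = a \<squnion> b" using H[OF _ _ l1 g1 g2'] a b by simp
  have "a = a \<sqinter> (a \<squnion> b)" using abs1[OF a b] by simp
  also have "\<dots> = a \<sqinter> b" using eq[symmetric] a b by simp
  finally have 1: "a = a \<sqinter> b" .
  have "b = b \<sqinter> (a \<squnion> b)" using abs1[OF b a] jcomm[OF a b] by simp
  also have "\<dots> = b \<sqinter> (a \<sqinter> b)" using eq[symmetric] a b by simp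
  also have "\<dots> = a \<sqinter> b" using a b by (simp only: mlcomm[of b a b] midem)
  finally show ?thesis using 1 by simp
qed

end

lemma ck_mpm: "Ck_algebra k M \<Longrightarrow> mpm M" unfolding Ck_algebra_def by (simp add: mpm_def)

lemma tt_C: "Ck_algebra k M \<Longrightarrow> x \<in> car M \<Longrightarrow> tt M x \<in> car M"
  unfolding Ck_algebra_def by (meson bij_betw_apply)

lemma ttpow_C: "Ck_algebra k M \<Longrightarrow> x \<in> car M \<Longrightarrow> (tt M ^^ i) x \<in> car M"
  by (induct i) (auto simp: tt_C)

lemma eval_C: "Ck_algebra k M \<Longrightarrow> \<forall>n. v n \<in> car M \<Longrightarrow> eval M v \<phi> \<in> car M"
proof (induct \<phi>)
  case (Tc \<phi>) thus ?case by (simp add: tt_C)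
qed (auto simp: mpm.mC[OF ck_mpm] mpm.jC[OF ck_mpm] mpm.nC[OF ck_mpm] mpm.pC[OF ck_mpm]
               mpm.zC[OF ck_mpm] mpm.uC[OF ck_mpm])

lemma eval_Tcpow: "eval M v ((Tc ^^ i) p) = (tt M ^^ i) (eval M v p)"
  by (induct i) auto

lemma eval_Conjs: "mpm M \<Longrightarrow> \<forall>\<phi>. eval M v \<phi> \<in> car M \<Longrightarrow>
  eval M v (Conjs xs) = un M \<longleftrightarrow> (\<forall>x\<in>set xs. eval M v x = un M)"
proof (induct xs rule: Conjs.induct)
  case (3 a b as)
  have "eval M v (Conjs (a # b # as)) = mt M (eval M v a) (eval M v (Conjs (b # as)))" by simp
  moreover have "mt M (eval M v a) (eval M v (Conjs (b # as))) = un M \<longleftrightarrow>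
      eval M v a = un M \<and> eval M v (Conjs (b # as)) = un M"
    using mpm.mU[OF 3(2)] mpm.mu[OF 3(2)] 3(3) by metis
  ultimately show ?case using 3 by auto
qed auto

lemma eval_eqv: "mpm M \<Longrightarrow> eval M v (eqv x y) = mpm.E M (eval M v x) (eval M v y)"
  by (simp add: eqv_def imp_def mpm.E_def mpm.I_def mpm.u_def)

lemma eval_delta:
  assumes k: "k \<ge> 1" and ck: "Ck_algebra k M" and v: "\<forall>n. v n \<in> car M"
  shows "eval M v (delta k p q) = un M \<longleftrightarrow> eval M v p = eval M v q"
proof -
  have m: "mpm M" using ck by (rule ck_mpm)
  have cl: "\<forall>\<phi>. eval M v \<phi> \<in> car M" using eval_C[OF ck v] by blast
  have "eval M v (delta k p q) = un M \<longleftrightarrow>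
        (\<forall>i<k. mpm.E M ((tt M ^^ i) (eval M v p)) ((tt M ^^ i) (eval M v q)) = un M)"
    unfolding delta_def using eval_Conjs[OF m cl] by (auto simp: eval_eqv[OF m] eval_Tcpow)
  also have "\<dots> \<longleftrightarrow> (\<forall>i<k. (tt M ^^ i) (eval M v p) = (tt M ^^ i) (eval M v q))"
    using mpm.E_sep[OF m] mpm.E_refl[OF m] ttpow_C[OF ck] cl by metis
  also have "\<dots> \<longleftrightarrow> eval M v p = eval M v q"
  proof
    assume "\<forall>i<k. (tt M ^^ i) (eval M v p) = (tt M ^^ i) (eval M v q)"
    thus "eval M v p = eval M v q" using k by (metis funpow_0 less_one order_less_le_trans)
  qed simp
  finally show ?thesis .
qed

theorem theorem7p6:
  fixes k :: nat
  assumes "k \<ge> 1"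
  shows
   "(\<forall>p1. cons_k TYPE('a) k {} (delta k (Var p1) (Var p1))) \<and>
    (\<forall>p1 p2. cons_k TYPE('a) k {delta k (Var p1) (Var p2)} (delta k (Var p2) (Var p1))) \<and>
    (\<forall>p1 p2 p3. cons_k TYPE('a) k {delta k (Var p1) (Var p2), delta k (Var p2) (Var p3)}
                        (delta k (Var p1) (Var p3))) \<and>
    (\<forall>p1 p2 p3 p4. cons_k TYPE('a) k {delta k (Var p1) (Var p3), delta k (Var p2) (Var p4)}
                        (delta k (Conj (Var p1) (Var p2)) (Conj (Var p3) (Var p4)))) \<and>
    (\<forall>p1 p2 p3 p4. cons_k TYPE('a) k {delta k (Var p1) (Var p3), delta k (Var p2) (Var p4)}
                        (delta k (Disj (Var p1) (Var p2)) (Disj (Var p3) (Var p4)))) \<and>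
    (\<forall>p1 p2. cons_k TYPE('a) k {delta k (Var p1) (Var p2)} (delta k (Neg (Var p1)) (Neg (Var p2)))) \<and>
    (\<forall>p1 p2. cons_k TYPE('a) k {delta k (Var p1) (Var p2)} (delta k (Star (Var p1)) (Star (Var p2)))) \<and>
    (\<forall>p1 p2. cons_k TYPE('a) k {delta k (Var p1) (Var p2)} (delta k (Tc (Var p1)) (Tc (Var p2)))) \<and>
    (\<forall>p1. cons_k TYPE('a) k {Var p1} (delta k (Var p1) (eqv (Var p1) (Var p1)))) \<and>
    (\<forall>p1. cons_k TYPE('a) k {delta k (Var p1) (eqv (Var p1) (Var p1))} (Var p1))"
proof -
  have D: "\<And>(M::'a ck_alg) v p q. Ck_algebra k M \<Longrightarrow> \<forall>n. v n \<in> car M \<Longrightarrow>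
     eval M v (delta k p q) = un M \<longleftrightarrow> eval M v p = eval M v q"
    using eval_delta[OF assms] by blast
  have R: "\<And>(M::'a ck_alg) v p. Ck_algebra k M \<Longrightarrow> \<forall>n. v n \<in> car M \<Longrightarrow>
     eval M v (eqv p p) = un M"
    using eval_eqv mpm.E_refl ck_mpm eval_C by metis
  show ?thesis unfolding cons_k_def using D R by simp
qed

end
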